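(* Let $(\Omega,\mathcal F)$ be a measurable space, $\mathcal X$ the set of bounded measurable functions, $w$ a capacity, and $\alpha\in(0,1]$. Then $\mathrm{ES}^w_\alpha=I_{w_\alpha}$ on $\mathcal X$, where $w_\alpha=\min(w/\alpha,1)$ (pointwise on $\mathcal F$). Moreover, $\mathrm{ES}^w_\alpha$ is a coherent risk measure if and only if $w_\alpha$ is submodular.
   Context: A capacity is an increasing function $w:\mathcal F\to\mathbb R$ with $w(\varnothing)=0$, $w(\Omega)=1$; it is submodular if $w(A\cup B)+w(A\cap B)\le w(A)+w(B)$ for all $A,B\in\mathcal F$. $I_w(X)=\int_{-\infty}^0(w(X\ge x)-1)\,\mathrm dx+\int_0^\infty w(X\ge x)\,\mathrm dx$. For $t\in(0,1)$, $\mathrm{VaR}^w_t(X)=\inf\{x\in\mathbb R:w(X\ge x)\le t\}$, and the Choquet Expected Shortfall is $\mathrm{ES}^w_\alpha(X)=\frac1\alpha\int_0^\alpha\mathrm{VaR}^w_t(X)\,\mathrm dt$. A mapping $\mathcal R:\mathcal X\to\mathbb R$ is a coherent risk measure if it is monotone ($X\le Y\Rightarrow\mathcal R(X)\le\mathcal R(Y)$), translation invariant ($\mathcal R(X+c)=\mathcal R(X)+c$), positively homogeneous ($\mathcal R(cX)=c\mathcal R(X)$ for $c>0$) and convex. *)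

theory Defs
  imports "HOL-Analysis.Analysis"
begin

definition bdd_meas :: "'a measure \<Rightarrow> ('a \<Rightarrow> real) set" where
  "bdd_meas M = {X. X \<in> borel_measurable M \<and> bounded (X ` space M)}"

definition capacity :: "'a measure \<Rightarrow> ('a set \<Rightarrow> real) \<Rightarrow> bool" where
  "capacity M w \<longleftrightarrow> w {} = 0 \<and> w (space M) = 1 \<and>
     (\<forall>A\<in>sets M. \<forall>B\<in>sets M. A \<subseteq> B \<longrightarrow> w A \<le> w B)"

definition submodular :: "'a measure \<Rightarrow> ('a set \<Rightarrow> real) \<Rightarrow> bool" where
  "submodular M w \<longleftrightarrow>
     (\<forall>A\<in>sets M. \<forall>B\<in>sets M. w (A \<union> B) + w (A \<inter> B) \<le> w A + w B)"

definition geq_set :: "'a measure \<Rightarrow> ('a \<Rightarrow> real) \<Rightarrow> real \<Rightarrow> 'a set" where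
  "geq_set M X x = {\<omega> \<in> space M. X \<omega> \<ge> x}"

definition choquet :: "'a measure \<Rightarrow> ('a set \<Rightarrow> real) \<Rightarrow> ('a \<Rightarrow> real) \<Rightarrow> real" where
  "choquet M w X =
     integral {..0} (\<lambda>x. w (geq_set M X x) - 1) + integral {0..} (\<lambda>x. w (geq_set M X x))"

definition VaR :: "'a measure \<Rightarrow> ('a set \<Rightarrow> real) \<Rightarrow> real \<Rightarrow> ('a \<Rightarrow> real) \<Rightarrow> real" where
  "VaR M w t X = Inf {x. w (geq_set M X x) \<le> t}"

definition ES :: "'a measure \<Rightarrow> ('a set \<Rightarrow> real) \<Rightarrow> real \<Rightarrow> ('a \<Rightarrow> real) \<Rightarrow> real" where
  "ES M w \<alpha> X = (1 / \<alpha>) * integral {0..\<alpha>} (\<lambda>t. VaR M w t X)"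

definition w_alpha :: "('a set \<Rightarrow> real) \<Rightarrow> real \<Rightarrow> 'a set \<Rightarrow> real" where
  "w_alpha w \<alpha> A = min (w A / \<alpha>) 1"

definition coherent :: "'a measure \<Rightarrow> (('a \<Rightarrow> real) \<Rightarrow> real) \<Rightarrow> bool" where
  "coherent M R \<longleftrightarrow>
     (\<forall>X\<in>bdd_meas M. \<forall>Y\<in>bdd_meas M. (\<forall>\<omega>\<in>space M. X \<omega> \<le> Y \<omega>) \<longrightarrow> R X \<le> R Y) \<and>
     (\<forall>X\<in>bdd_meas M. \<forall>c::real. R (\<lambda>\<omega>. X \<omega> + c) = R X + c) \<and>
     (\<forall>X\<in>bdd_meas M. \<forall>c::real. c > 0 \<longrightarrow> R (\<lambda>\<omega>. c * X \<omega>) = c * R X) \<and>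
     (\<forall>X\<in>bdd_meas M. \<forall>Y\<in>bdd_meas M. \<forall>l::real. 0 \<le> l \<and> l \<le> 1 \<longrightarrow>
        R (\<lambda>\<omega>. l * X \<omega> + (1 - l) * Y \<omega>) \<le> l * R X + (1 - l) * R Y)"

end

theory Submission
  imports Defs
begin



lemma antimono_integrable:
  fixes \<phi> :: "real \<Rightarrow> real"
  assumes "\<And>x y. x \<le> y \<Longrightarrow> \<phi> y \<le> \<phi> x"
  shows "\<phi> integrable_on {a..b}"
proof -
  have "mono_on {a..b} (\<lambda>x. - \<phi> x)" by (auto simp: mono_on_def assms)
  then have "(\<lambda>x. - \<phi> x) integrable_on {a..b}" by (rule integrable_on_mono_on)
  from integrable_neg[OF this] show ?thesis by simp
qed

lemma rep_abs:
  fixes \<phi> :: "real \<Rightarrow> real"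
  assumes anti: "\<And>x y. x \<le> y \<Longrightarrow> \<phi> y \<le> \<phi> x"
    and lo: "\<And>x. x \<le> L \<Longrightarrow> \<phi> x = 1" and hi: "\<And>x. B \<le> x \<Longrightarrow> \<phi> x = 0" and LB: "L \<le> B"
  shows "integral {..0} (\<lambda>x. \<phi> x - 1) + integral {0..} \<phi> = L + integral {L..B} \<phi>"
proof -
  define L' where "L' = min L 0"
  define B' where "B' = max B 0"
  have int: "\<And>a b. \<phi> integrable_on {a..b}" by (rule antimono_integrable[OF anti])
  have int1: "(\<lambda>x. \<phi> x - 1) integrable_on {L'..0}"
    using integrable_diff[OF int integrable_const_ivl[of "1::real" L' 0]] by simp
  have "((\<lambda>x. \<phi> x - 1) has_integral integral {L'..0} (\<lambda>x. \<phi> x - 1)) {L'..0}"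
    using int1 by (rule integrable_integral)
  moreover have "{x \<in> {L'..0} - {..0}. \<phi> x - 1 \<noteq> 0} = {}" by auto
  moreover have "{x \<in> {..0} - {L'..0}. \<phi> x - 1 \<noteq> 0} = {}"
    using lo by (auto simp: L'_def) (smt (verit) lo)
  ultimately have "((\<lambda>x. \<phi> x - 1) has_integral integral {L'..0} (\<lambda>x. \<phi> x - 1)) {..0}"
    using has_integral_spike_set_eq[of "{L'..0}" "{..0}" "\<lambda>x. \<phi> x - 1"] by (metis negligible_empty)
  then have i1: "integral {..0} (\<lambda>x. \<phi> x - 1) = integral {L'..0} (\<lambda>x. \<phi> x - 1)"
    by (rule integral_unique)
  have "(\<phi> has_integral integral {0..B'} \<phi>) {0..B'}"
    using int by (rule integrable_integral)
  moreover have "{x \<in> {0..B'} - {0..}. \<phi> x \<noteq> 0} = {}" by auto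
  moreover have "{x \<in> {0..} - {0..B'}. \<phi> x \<noteq> 0} = {}"
    using hi by (auto simp: B'_def) (smt (verit) hi)
  ultimately have "(\<phi> has_integral integral {0..B'} \<phi>) {0..}"
    using has_integral_spike_set_eq[of "{0..B'}" "{0..}" \<phi>] by (metis negligible_empty)
  then have i2: "integral {0..} \<phi> = integral {0..B'} \<phi>"
    by (rule integral_unique)
  have i3: "integral {L'..0} (\<lambda>x. \<phi> x - 1) = integral {L'..0} \<phi> - (0 - L')"
    using integral_diff[OF int integrable_const_ivl[of "1::real" L' 0]]
    by (simp add: L'_def)
  have i4: "integral {L'..0} \<phi> + integral {0..B'} \<phi> = integral {L'..B'} \<phi>"
    by (rule Henstock_Kurzweil_Integration.integral_combine) (auto simp: L'_def B'_def int)
  have i5: "integral {L'..L} \<phi> + integral {L..B'} \<phi> = integral {L'..B'} \<phi>"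
    by (rule Henstock_Kurzweil_Integration.integral_combine) (use LB in \<open>auto simp: L'_def B'_def int\<close>)
  have i6: "integral {L..B} \<phi> + integral {B..B'} \<phi> = integral {L..B'} \<phi>"
    by (rule Henstock_Kurzweil_Integration.integral_combine) (use LB in \<open>auto simp: L'_def B'_def int\<close>)
  have i7: "integral {L'..L} \<phi> = L - L'"
  proof -
    have "integral {L'..L} \<phi> = integral {L'..L} (\<lambda>x. 1::real)"
      by (rule integral_cong) (auto simp: lo)
    then show ?thesis by (simp add: L'_def)
  qed
  have i8: "integral {B..B'} \<phi> = 0"
  proof -
    have "integral {B..B'} \<phi> = integral {B..B'} (\<lambda>x. 0::real)"
      by (rule integral_cong) (auto simp: hi)
    then show ?thesis by simp
  qed
  show ?thesis using i1 i2 i3 i4 i5 i6 i7 i8 by linarith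
qed

lemma emeasure_between:
  fixes E :: "real set"
  assumes "E \<in> sets borel" "{a<..<b} \<subseteq> E" "E \<subseteq> {a..b}" "a \<le> b"
  shows "emeasure lborel E = ennreal (b - a)"
proof (rule antisym)
  show "emeasure lborel E \<le> ennreal (b - a)"
    using emeasure_mono[OF assms(3), of lborel] assms(4) by simp
  show "ennreal (b - a) \<le> emeasure lborel E"
    using emeasure_mono[OF assms(2), of lborel] assms(1,4) by simp
qed

lemma antimono_borel:
  fixes \<phi> :: "real \<Rightarrow> real"
  assumes "\<And>x y. x \<le> y \<Longrightarrow> \<phi> y \<le> \<phi> x"
  shows "\<phi> \<in> borel_measurable borel"
proof -
  have "mono (\<lambda>x. - \<phi> x)" by (auto simp: mono_def assms)
  then have "(\<lambda>x. - \<phi> x) \<in> borel_measurable borel" by (rule borel_measurable_mono)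
  then have "(\<lambda>x. - (- \<phi> x)) \<in> borel_measurable borel" by measurable
  then show ?thesis by simp
qed

lemma layer_abs:
  fixes \<phi> :: "real \<Rightarrow> real"
  assumes anti: "\<And>x y. x \<le> y \<Longrightarrow> \<phi> y \<le> \<phi> x"
    and lo: "\<And>x. x \<le> L \<Longrightarrow> \<phi> x = 1" and hi: "\<And>x. B \<le> x \<Longrightarrow> \<phi> x = 0" and LB: "L \<le> B"
    and a0: "0 < \<alpha>" and a1: "\<alpha> \<le> 1"
  shows "integral {0..\<alpha>} (\<lambda>t. Inf {x. \<phi> x \<le> t}) = \<alpha> * L + integral {L..B} (\<lambda>x. min (\<phi> x) \<alpha>)"
proof -
  define q where "q t = Inf {x. \<phi> x \<le> t}" for t
  have phi0: "0 \<le> \<phi> x" for x using anti[of x "max x B"] hi[of "max x B"] by simp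
  have phi1: "\<phi> x \<le> 1" for x using anti[of "min x L" x] lo[of "min x L"] by simp
  have qp: "L \<le> q t \<and> q t \<le> B \<and> (\<forall>x. x < q t \<longrightarrow> t < \<phi> x) \<and> (\<forall>x. q t < x \<longrightarrow> \<phi> x \<le> t)"
    if t0: "0 \<le> t" and t1: "t < 1" for t
  proof -
    let ?S = "{x. \<phi> x \<le> t}"
    have Bin: "B \<in> ?S" using hi[of B] t0 by simp
    have lb: "L \<le> x" if "x \<in> ?S" for x
    proof (rule ccontr)
      assume "\<not> L \<le> x" then have "\<phi> x = 1" using lo by simp
      with that t1 show False by simp
    qed
    have bb: "bdd_below ?S" using lb by (auto simp: bdd_below_def)
    have ne: "?S \<noteq> {}" using Bin by auto
    have 1: "q t \<le> B" unfolding q_def using cInf_lower[OF Bin bb] .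
    have 2: "L \<le> q t" unfolding q_def using cInf_greatest[OF ne] lb by blast
    have 3: "t < \<phi> x" if "x < q t" for x
    proof (rule ccontr)
      assume "\<not> t < \<phi> x" then have "x \<in> ?S" by simp
      then have "q t \<le> x" unfolding q_def using cInf_lower[OF _ bb] by blast
      with that show False by simp
    qed
    have 4: "\<phi> x \<le> t" if "q t < x" for x
    proof -
      from that have "Inf ?S < x" unfolding q_def .
      then obtain y where "y \<in> ?S" "y < x" using cInf_less_iff[OF ne bb] by blast
      then show ?thesis using anti[of y x] by simp
    qed
    show ?thesis using 1 2 3 4 by blast
  qed
  define g where "g t = (if t < 1 then q t else L) - L" for t
  define h where "h x = min (\<phi> x) \<alpha>" for x
  have g0: "0 \<le> g t" if "0 \<le> t" for t using qp[OF that] by (simp add: g_def)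
  have h0: "0 \<le> h x" for x using phi0 a0 by (simp add: h_def)
  have ganti: "g t \<le> g s" if "0 \<le> s" "s \<le> t" for s t
  proof (cases "t < 1")
    case True
    then have s1: "s < 1" using that by simp
    have "q t \<le> q s"
    proof (rule ccontr)
      assume "\<not> q t \<le> q s"
      then have "q s < (q s + q t)/2" "(q s + q t)/2 < q t" by simp_all
      then have "\<phi> ((q s + q t)/2) \<le> s" "t < \<phi> ((q s + q t)/2)"
        using qp[OF that(1) s1] qp[of t] that True by auto
      with that show False by simp
    qed
    then show ?thesis using True s1 by (simp add: g_def)
  next
    case False
    then show ?thesis using g0[OF that(1)] by (simp add: g_def)
  qed
  have gint: "g integrable_on {0..\<alpha>}"
  proof -
    have "mono_on {0..\<alpha>} (\<lambda>x. - g x)" by (auto simp: mono_on_def intro: ganti)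
    then have "(\<lambda>x. - g x) integrable_on {0..\<alpha>}" by (rule integrable_on_mono_on)
    from integrable_neg[OF this] show ?thesis by simp
  qed
  have hanti: "h y \<le> h x" if "x \<le> y" for x y using anti[OF that] by (auto simp: h_def)
  have hint: "h integrable_on {L..B}" by (rule antimono_integrable[OF hanti])
  have nn1: "(\<integral>\<^sup>+t. ennreal (g t) * indicator {0..\<alpha>} t \<partial>lborel) = ennreal (integral {0..\<alpha>} g)"
    by (rule nn_integral_has_integral_lebesgue') (use g0 gint in auto)
  have nn2: "(\<integral>\<^sup>+x. ennreal (h x) * indicator {L..B} x \<partial>lborel) = ennreal (integral {L..B} h)"
    by (rule nn_integral_has_integral_lebesgue') (use h0 hint in auto)
  have phim[measurable]: "\<phi> \<in> borel_measurable borel" by (rule antimono_borel[OF anti])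
  define f where "f t x = (if 0 \<le> t \<and> t \<le> \<alpha> \<and> L \<le> x \<and> x \<le> B \<and> t < \<phi> x then 1 else 0 :: ennreal)" for t x
  have fm: "case_prod f \<in> borel_measurable (lborel \<Otimes>\<^sub>M lborel)"
    unfolding f_def case_prod_unfold by measurable
  have in1: "(\<integral>\<^sup>+x. f t x \<partial>lborel) = ennreal (g t) * indicator {0..\<alpha>} t" for t
  proof (cases "0 \<le> t \<and> t \<le> \<alpha>")
    case False
    then show ?thesis by (auto simp: f_def)
  next
    case True
    define E where "E = {x \<in> space borel. L \<le> x \<and> x \<le> B \<and> t < \<phi> x}"
    have Em: "E \<in> sets borel" unfolding E_def by measurable
    have "(\<integral>\<^sup>+x. f t x \<partial>lborel) = (\<integral>\<^sup>+x. indicator E x \<partial>lborel)"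
      by (rule nn_integral_cong) (use True in \<open>auto simp: f_def E_def indicator_def\<close>)
    also have "\<dots> = emeasure lborel E" using Em by simp
    also have "\<dots> = ennreal (g t)"
    proof (cases "t < 1")
      case True': True
      note Q = qp[of t]
      have "emeasure lborel E = ennreal (q t - L)"
        by (rule emeasure_between[OF Em]) (use Q True True' in \<open>auto simp: E_def not_less[symmetric]\<close>)
      then show ?thesis using True' by (simp add: g_def)
    next
      case False
      then have "E = {}" using phi1 unfolding E_def by (auto simp: not_less) (smt (verit) phi1)
      then show ?thesis using False by (simp add: g_def)
    qed
    finally show ?thesis using True by simp
  qed
  have in2: "(\<integral>\<^sup>+t. f t x \<partial>lborel) = ennreal (h x) * indicator {L..B} x" for x
  proof (cases "L \<le> x \<and> x \<le> B")
    case False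
    then show ?thesis by (auto simp: f_def)
  next
    case True
    define E where "E = {t \<in> space borel. 0 \<le> t \<and> t \<le> \<alpha> \<and> t < \<phi> x}"
    have Em: "E \<in> sets borel" unfolding E_def by measurable
    have "(\<integral>\<^sup>+t. f t x \<partial>lborel) = (\<integral>\<^sup>+t. indicator E t \<partial>lborel)"
      by (rule nn_integral_cong) (use True in \<open>auto simp: f_def E_def indicator_def\<close>)
    also have "\<dots> = emeasure lborel E" using Em by simp
    also have "\<dots> = ennreal (h x - 0)"
      by (rule emeasure_between[OF Em]) (use h0[of x] in \<open>auto simp: E_def h_def\<close>)
    finally show ?thesis using True by simp
  qed
  have "ennreal (integral {0..\<alpha>} g) = (\<integral>\<^sup>+t. (\<integral>\<^sup>+x. f t x \<partial>lborel) \<partial>lborel)"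
    using nn1 in1 by simp
  also have "\<dots> = (\<integral>\<^sup>+x. (\<integral>\<^sup>+t. f t x \<partial>lborel) \<partial>lborel)"
    using lborel_pair.Fubini'[OF fm] by simp
  also have "\<dots> = ennreal (integral {L..B} h)"
    using nn2 in2 by simp
  finally have eq: "integral {0..\<alpha>} g = integral {L..B} h"
    using integral_nonneg[OF gint g0] integral_nonneg[OF hint h0] by simp
  have gq: "g t = q t - L" if "t \<in> {0..\<alpha>} - {1}" for t using that a1 by (auto simp: g_def)
  have qint: "q integrable_on {0..\<alpha>}"
  proof -
    have "(\<lambda>t. g t + L) integrable_on {0..\<alpha>}" using integrable_add[OF gint integrable_const_ivl] by simp
    moreover have "\<And>t. t \<in> {0..\<alpha>} - {1} \<Longrightarrow> q t = g t + L" using gq by simp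
    ultimately show ?thesis using integrable_spike_finite[where S="{1}" and T="{0..\<alpha>}" and g=q and f="\<lambda>t. g t + L"] by blast
  qed
  have "integral {0..\<alpha>} g = integral {0..\<alpha>} (\<lambda>t. q t - L)"
    by (rule integral_spike[of "{1}"]) (use gq in auto)
  also have "\<dots> = integral {0..\<alpha>} q - \<alpha> * L"
    using integral_diff[OF qint integrable_const_ivl[of L 0 \<alpha>]] a0 by simp
  finally show ?thesis using eq unfolding q_def h_def by simp
qed




lemma bdd_meas_iff:
  "X \<in> bdd_meas M \<longleftrightarrow> X \<in> borel_measurable M \<and> (\<exists>K. \<forall>\<omega>\<in>space M. \<bar>X \<omega>\<bar> \<le> K)"
  unfolding bdd_meas_def bounded_iff by auto

lemma bdd_bounds:
  assumes "X \<in> bdd_meas M"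
  obtains L B where "L \<le> B" "\<And>\<omega>. \<omega> \<in> space M \<Longrightarrow> L \<le> X \<omega> \<and> X \<omega> < B"
proof -
  obtain K where K: "\<forall>\<omega>\<in>space M. \<bar>X \<omega>\<bar> \<le> K" using assms[unfolded bdd_meas_iff] by blast
  show ?thesis
  proof (rule that[of "- \<bar>K\<bar>" "\<bar>K\<bar> + 1"])
    show "- \<bar>K\<bar> \<le> \<bar>K\<bar> + 1" by simp
    fix \<omega> assume "\<omega> \<in> space M"
    then have h: "\<bar>X \<omega>\<bar> \<le> K" using K by blast
    then show "- \<bar>K\<bar> \<le> X \<omega> \<and> X \<omega> < \<bar>K\<bar> + 1" by arith
  qed
qed

lemma bdd_meas_meas: "X \<in> bdd_meas M \<Longrightarrow> X \<in> borel_measurable M"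
  by (simp add: bdd_meas_iff)

lemma bdd_add: "X \<in> bdd_meas M \<Longrightarrow> Y \<in> bdd_meas M \<Longrightarrow> (\<lambda>\<omega>. X \<omega> + Y \<omega>) \<in> bdd_meas M"
proof -
  assume X: "X \<in> bdd_meas M" and Y: "Y \<in> bdd_meas M"
  obtain K1 where K1: "\<forall>\<omega>\<in>space M. \<bar>X \<omega>\<bar> \<le> K1" using X[unfolded bdd_meas_iff] by blast
  obtain K2 where K2: "\<forall>\<omega>\<in>space M. \<bar>Y \<omega>\<bar> \<le> K2" using Y[unfolded bdd_meas_iff] by blast
  have "\<forall>\<omega>\<in>space M. \<bar>X \<omega> + Y \<omega>\<bar> \<le> K1 + K2" using K1 K2 by (smt (verit))
  moreover have "(\<lambda>\<omega>. X \<omega> + Y \<omega>) \<in> borel_measurable M"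
  proof -
    have [measurable]: "X \<in> borel_measurable M" "Y \<in> borel_measurable M" using X Y by (simp_all add: bdd_meas_iff)
    show ?thesis by measurable
  qed
  ultimately show ?thesis by (auto simp: bdd_meas_iff)
qed

lemma bdd_cmult: "X \<in> bdd_meas M \<Longrightarrow> (\<lambda>\<omega>. c * X \<omega>) \<in> bdd_meas M"
proof -
  assume X: "X \<in> bdd_meas M"
  obtain K1 where K1: "\<forall>\<omega>\<in>space M. \<bar>X \<omega>\<bar> \<le> K1" using X[unfolded bdd_meas_iff] by blast
  have "\<forall>\<omega>\<in>space M. \<bar>c * X \<omega>\<bar> \<le> \<bar>c\<bar> * K1" using K1 by (simp add: abs_mult mult_left_mono)
  moreover have "(\<lambda>\<omega>. c * X \<omega>) \<in> borel_measurable M"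
  proof -
    have [measurable]: "X \<in> borel_measurable M" using X by (simp add: bdd_meas_iff)
    show ?thesis by measurable
  qed
  ultimately show ?thesis by (auto simp: bdd_meas_iff)
qed

lemma bdd_const: "(\<lambda>\<omega>. c) \<in> bdd_meas M"
  by (auto simp: bdd_meas_iff)

lemma bdd_indicator: "A \<in> sets M \<Longrightarrow> (indicator A :: 'a \<Rightarrow> real) \<in> bdd_meas M"
  by (auto simp: bdd_meas_iff intro!: exI[of _ 1] simp: indicator_def)

lemma bdd_plus_const: "X \<in> bdd_meas M \<Longrightarrow> (\<lambda>\<omega>. X \<omega> + c) \<in> bdd_meas M"
  using bdd_add[OF _ bdd_const] .

lemma geq_set_sets: "X \<in> borel_measurable M \<Longrightarrow> geq_set M X x \<in> sets M"
  unfolding geq_set_def by measurable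

lemma cap_bounds:
  assumes "capacity M v" "A \<in> sets M"
  shows "0 \<le> v A" "v A \<le> 1"
proof -
  show "0 \<le> v A" using assms unfolding capacity_def by (metis sets.empty_sets empty_subsetI)
  have "v A \<le> v (space M)" using assms sets.top sets.sets_into_space unfolding capacity_def by blast
  then show "v A \<le> 1" using assms(1) by (simp add: capacity_def)
qed

lemma cap_mono: "capacity M v \<Longrightarrow> A \<in> sets M \<Longrightarrow> B \<in> sets M \<Longrightarrow> A \<subseteq> B \<Longrightarrow> v A \<le> v B"
  unfolding capacity_def by blast

lemma level_anti:
  assumes "capacity M v" "X \<in> borel_measurable M" "x \<le> y"
  shows "v (geq_set M X y) \<le> v (geq_set M X x)"
  by (rule cap_mono[OF assms(1) geq_set_sets[OF assms(2)] geq_set_sets[OF assms(2)]])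
     (use assms(3) in \<open>auto simp: geq_set_def\<close>)

lemma ch_rep:
  assumes cap: "capacity M v" and X: "X \<in> borel_measurable M"
    and bnd: "\<And>\<omega>. \<omega> \<in> space M \<Longrightarrow> L \<le> X \<omega> \<and> X \<omega> < B" and LB: "L \<le> B"
  shows "choquet M v X = L + integral {L..B} (\<lambda>x. v (geq_set M X x))"
  unfolding choquet_def
proof (rule rep_abs[OF _ _ _ LB])
  show "v (geq_set M X y) \<le> v (geq_set M X x)" if "x \<le> y" for x y
    using level_anti[OF cap X that] .
  show "v (geq_set M X x) = 1" if "x \<le> L" for x
  proof -
    have "geq_set M X x = space M" using bnd that by (force simp: geq_set_def)
    then show ?thesis using cap by (simp add: capacity_def)
  qed
  show "v (geq_set M X x) = 0" if "B \<le> x" for x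
  proof -
    have "geq_set M X x = {}" using bnd that by (force simp: geq_set_def)
    then show ?thesis using cap by (simp add: capacity_def)
  qed
qed

lemma capacity_w_alpha:
  assumes "capacity M w" "0 < \<alpha>" "\<alpha> \<le> 1"
  shows "capacity M (w_alpha w \<alpha>)"
proof -
  have m: "min (w A / \<alpha>) 1 \<le> min (w B / \<alpha>) 1" if "A \<in> sets M" "B \<in> sets M" "A \<subseteq> B" for A B
  proof -
    have "w A \<le> w B" using assms(1) that unfolding capacity_def by blast
    then have "w A / \<alpha> \<le> w B / \<alpha>" using assms(2) by (simp add: divide_right_mono)
    then show ?thesis by (rule min.mono) simp
  qed
  have "min (1 / \<alpha>) 1 = (1::real)" using assms(2,3) by (simp add: min_def)
  then show ?thesis using assms(1) m unfolding capacity_def w_alpha_def by simp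
qed

lemma ES_eq:
  assumes cap: "capacity M w" and a0: "0 < \<alpha>" and a1: "\<alpha> \<le> 1" and X: "X \<in> bdd_meas M"
  shows "ES M w \<alpha> X = choquet M (w_alpha w \<alpha>) X"
proof -
  obtain L B where LB: "L \<le> B" and bnd: "\<And>\<omega>. \<omega> \<in> space M \<Longrightarrow> L \<le> X \<omega> \<and> X \<omega> < B"
    using bdd_bounds[OF X] by blast
  have Xm: "X \<in> borel_measurable M" using X by (rule bdd_meas_meas)
  define \<phi> where "\<phi> x = w (geq_set M X x)" for x
  have lay: "integral {0..\<alpha>} (\<lambda>t. Inf {x. \<phi> x \<le> t}) = \<alpha> * L + integral {L..B} (\<lambda>x. min (\<phi> x) \<alpha>)"
  proof (rule layer_abs[OF _ _ _ LB a0 a1])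
    show "\<phi> y \<le> \<phi> x" if "x \<le> y" for x y
      unfolding \<phi>_def using level_anti[OF cap Xm that] .
    show "\<phi> x = 1" if "x \<le> L" for x
    proof -
      have "geq_set M X x = space M" using bnd that by (force simp: geq_set_def)
      then show ?thesis using cap by (simp add: capacity_def \<phi>_def)
    qed
    show "\<phi> x = 0" if "B \<le> x" for x
    proof -
      have "geq_set M X x = {}" using bnd that by (force simp: geq_set_def)
      then show ?thesis using cap by (simp add: capacity_def \<phi>_def)
    qed
  qed
  have ch: "choquet M (w_alpha w \<alpha>) X = L + integral {L..B} (\<lambda>x. min (\<phi> x) \<alpha> / \<alpha>)"
  proof -
    have "choquet M (w_alpha w \<alpha>) X = L + integral {L..B} (\<lambda>x. w_alpha w \<alpha> (geq_set M X x))"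
      by (rule ch_rep[OF capacity_w_alpha[OF cap a0 a1] Xm bnd LB])
    also have "(\<lambda>x. w_alpha w \<alpha> (geq_set M X x)) = (\<lambda>x. min (\<phi> x) \<alpha> / \<alpha>)"
    proof (rule ext)
      fix x
      have "min (p / \<alpha>) 1 = min p \<alpha> / \<alpha>" for p :: real
        using a0 by (cases "p \<le> \<alpha>") (simp_all add: min_def field_simps)
      then show "w_alpha w \<alpha> (geq_set M X x) = min (\<phi> x) \<alpha> / \<alpha>" by (simp add: w_alpha_def \<phi>_def)
    qed
    finally show ?thesis .
  qed
  have "ES M w \<alpha> X = (1 / \<alpha>) * integral {0..\<alpha>} (\<lambda>t. Inf {x. \<phi> x \<le> t})"
    unfolding ES_def VaR_def \<phi>_def by simp
  also have "\<dots> = L + integral {L..B} (\<lambda>x. min (\<phi> x) \<alpha>) / \<alpha>"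
    using lay a0 by (simp add: field_simps)
  finally show ?thesis using ch by simp
qed



lemma level_integrable:
  assumes "capacity M v" "X \<in> borel_measurable M"
  shows "(\<lambda>x. v (geq_set M X x)) integrable_on {a..b}"
  by (rule antimono_integrable) (rule level_anti[OF assms])

lemma ch_mono:
  assumes cap: "capacity M v" and X: "X \<in> bdd_meas M" and Y: "Y \<in> bdd_meas M"
    and le: "\<And>\<omega>. \<omega> \<in> space M \<Longrightarrow> X \<omega> \<le> Y \<omega>"
  shows "choquet M v X \<le> choquet M v Y"
proof -
  obtain L1 B1 where 1: "L1 \<le> B1" "\<And>\<omega>. \<omega> \<in> space M \<Longrightarrow> L1 \<le> X \<omega> \<and> X \<omega> < B1"
    using bdd_bounds[OF X] by blast
  obtain L2 B2 where 2: "L2 \<le> B2" "\<And>\<omega>. \<omega> \<in> space M \<Longrightarrow> L2 \<le> Y \<omega> \<and> Y \<omega> < B2"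
    using bdd_bounds[OF Y] by blast
  define L where "L = min L1 L2"
  define B where "B = max B1 B2"
  have LB: "L \<le> B" using 1 2 by (simp add: L_def B_def)
  have Xm: "X \<in> borel_measurable M" and Ym: "Y \<in> borel_measurable M" using X Y by (auto intro: bdd_meas_meas)
  have bX: "L \<le> X \<omega> \<and> X \<omega> < B" if "\<omega> \<in> space M" for \<omega> using 1(2)[OF that] by (auto simp: L_def B_def)
  have bY: "L \<le> Y \<omega> \<and> Y \<omega> < B" if "\<omega> \<in> space M" for \<omega> using 2(2)[OF that] by (auto simp: L_def B_def)
  have "integral {L..B} (\<lambda>x. v (geq_set M X x)) \<le> integral {L..B} (\<lambda>x. v (geq_set M Y x))"
  proof (rule integral_le[OF level_integrable[OF cap Xm] level_integrable[OF cap Ym]])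
    fix x
    show "v (geq_set M X x) \<le> v (geq_set M Y x)"
      by (rule cap_mono[OF cap geq_set_sets[OF Xm] geq_set_sets[OF Ym]])
         (use le in \<open>force simp: geq_set_def\<close>)
  qed
  then show ?thesis using ch_rep[OF cap Xm bX LB] ch_rep[OF cap Ym bY LB] by simp
qed

lemma ch_trans:
  assumes cap: "capacity M v" and X: "X \<in> bdd_meas M"
  shows "choquet M v (\<lambda>\<omega>. X \<omega> + c) = choquet M v X + c"
proof -
  obtain L B where LB: "L \<le> B" and b: "\<And>\<omega>. \<omega> \<in> space M \<Longrightarrow> L \<le> X \<omega> \<and> X \<omega> < B"
    using bdd_bounds[OF X] by blast
  have Xm: "X \<in> borel_measurable M" using X by (rule bdd_meas_meas)
  have Xcm: "(\<lambda>\<omega>. X \<omega> + c) \<in> borel_measurable M" using Xm by measurable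
  have bc: "L + c \<le> X \<omega> + c \<and> X \<omega> + c < B + c" if "\<omega> \<in> space M" for \<omega> using b[OF that] by simp
  have gs: "geq_set M (\<lambda>\<omega>. X \<omega> + c) x = geq_set M X (x + - c)" for x
    by (auto simp: geq_set_def)
  have "choquet M v (\<lambda>\<omega>. X \<omega> + c) = (L + c) + integral {L+c..B+c} (\<lambda>x. v (geq_set M X (x + - c)))"
    using ch_rep[OF cap Xcm bc] LB by (simp add: gs)
  also have "integral {L+c..B+c} (\<lambda>x. v (geq_set M X (x + - c))) = integral {L..B} (\<lambda>x. v (geq_set M X x))"
    using integral_shift_real_ivl[of L "-c" B "\<lambda>x. v (geq_set M X x)"] by simp
  finally show ?thesis using ch_rep[OF cap Xm b LB] by simp
qed

lemma ch_homog:
  assumes cap: "capacity M v" and X: "X \<in> bdd_meas M" and c: "0 < c"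
  shows "choquet M v (\<lambda>\<omega>. c * X \<omega>) = c * choquet M v X"
proof -
  obtain L B where LB: "L \<le> B" and b: "\<And>\<omega>. \<omega> \<in> space M \<Longrightarrow> L \<le> X \<omega> \<and> X \<omega> < B"
    using bdd_bounds[OF X] by blast
  have Xm: "X \<in> borel_measurable M" using X by (rule bdd_meas_meas)
  have Xcm: "(\<lambda>\<omega>. c * X \<omega>) \<in> borel_measurable M" using Xm by measurable
  have bc: "L * c \<le> c * X \<omega> \<and> c * X \<omega> < B * c" if "\<omega> \<in> space M" for \<omega>
    using b[OF that] c by (simp add: mult.commute)
  have LBc: "L * c \<le> B * c" using LB c by (simp add: mult_right_mono)
  define \<phi> where "\<phi> x = v (geq_set M X x)" for x
  have gs: "geq_set M (\<lambda>\<omega>. c * X \<omega>) x = geq_set M X (1 / c * x)" for x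
    using c by (auto simp: geq_set_def field_simps)
  have "(\<phi> has_integral integral {L..B} \<phi>) {L..B}"
    unfolding \<phi>_def by (rule integrable_integral[OF level_integrable[OF cap Xm]])
  from has_integral_stretch_real[OF this, of "1/c"] c
  have "((\<lambda>x. \<phi> (x / c)) has_integral c * integral {L..B} \<phi>) ((\<lambda>x. x * c) ` {L..B})"
    by simp
  moreover have "(\<lambda>x. x * c) ` {L..B} = {L * c..B * c}"
    using image_mult_atLeastAtMost_if'[of c L B] LB c by simp
  ultimately have "((\<lambda>x. \<phi> (1 / c * x)) has_integral c * integral {L..B} \<phi>) {L * c..B * c}"
    by simp
  then have "integral {L * c..B * c} (\<lambda>x. \<phi> (1 / c * x)) = c * integral {L..B} \<phi>"
    by (rule integral_unique)
  moreover have "choquet M v (\<lambda>\<omega>. c * X \<omega>) = L * c + integral {L * c..B * c} (\<lambda>x. \<phi> (1 / c * x))"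
    using ch_rep[OF cap Xcm bc LBc] by (simp add: gs \<phi>_def)
  moreover have "choquet M v X = L + integral {L..B} \<phi>"
    using ch_rep[OF cap Xm b LB] by (simp add: \<phi>_def[abs_def])
  ultimately show ?thesis by (simp add: algebra_simps)
qed

lemma ch_key:
  assumes cap: "capacity M v" and sub: "submodular M v" and Z: "Z \<in> bdd_meas M"
    and A: "A \<in> sets M" and c: "0 < c"
  shows "choquet M v (\<lambda>\<omega>. Z \<omega> + c * indicator A \<omega>) \<le> choquet M v Z + c * v A"
proof -
  obtain L B where LB: "L \<le> B" and b: "\<And>\<omega>. \<omega> \<in> space M \<Longrightarrow> L \<le> Z \<omega> \<and> Z \<omega> < B"
    using bdd_bounds[OF Z] by blast
  have Zm: "Z \<in> borel_measurable M" using Z by (rule bdd_meas_meas)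
  have Z'm: "(\<lambda>\<omega>. Z \<omega> + c * indicator A \<omega>) \<in> borel_measurable M" using Zm A by measurable
  have LBc: "L \<le> B + c" using LB c by simp
  have b1: "L \<le> Z \<omega> \<and> Z \<omega> < B + c" if "\<omega> \<in> space M" for \<omega> using b[OF that] c by simp
  have b2: "L \<le> Z \<omega> + c * indicator A \<omega> \<and> Z \<omega> + c * indicator A \<omega> < B + c" if "\<omega> \<in> space M" for \<omega>
    using b[OF that] c by (auto simp: indicator_def)
  define \<phi> where "\<phi> x = v (geq_set M Z x)" for x
  define \<psi> where "\<psi> x = v (geq_set M (\<lambda>\<omega>. Z \<omega> + c * indicator A \<omega>) x)" for x
  define f where "f x = v (A \<inter> geq_set M Z x)" for x
  have Asp: "A \<subseteq> space M" using A by (rule sets.sets_into_space)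
  have fanti: "f y \<le> f x" if "x \<le> y" for x y
    unfolding f_def
    by (rule cap_mono[OF cap]) (use A geq_set_sets[OF Zm] that in \<open>auto simp: geq_set_def\<close>)
  have fint: "f integrable_on {a..b}" for a b by (rule antimono_integrable[OF fanti])
  have fshint: "(\<lambda>x. f (x - c)) integrable_on {a..b}" for a b
    by (rule antimono_integrable) (use fanti in auto)
  have \<phi>int: "\<phi> integrable_on {a..b}" for a b unfolding \<phi>_def by (rule level_integrable[OF cap Zm])
  have \<psi>int: "\<psi> integrable_on {a..b}" for a b unfolding \<psi>_def by (rule level_integrable[OF cap Z'm])
  have pt: "\<psi> x \<le> \<phi> x + f (x - c) - f x" for x
  proof -
    let ?U = "geq_set M Z x" and ?V = "A \<inter> geq_set M Z (x - c)"
    have U: "?U \<in> sets M" and V: "?V \<in> sets M" using geq_set_sets[OF Zm] A by auto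
    have un: "geq_set M (\<lambda>\<omega>. Z \<omega> + c * indicator A \<omega>) x = ?U \<union> ?V"
      using c Asp by (auto simp: geq_set_def indicator_def)
    have it: "?U \<inter> ?V = A \<inter> geq_set M Z x"
      using c by (auto simp: geq_set_def)
    have "v (?U \<union> ?V) + v (?U \<inter> ?V) \<le> v ?U + v ?V"
      using sub U V unfolding submodular_def by blast
    then show ?thesis unfolding \<psi>_def \<phi>_def f_def un it by simp
  qed
  have I1: "integral {L..B+c} \<psi> \<le> integral {L..B+c} (\<lambda>x. \<phi> x + f (x - c) - f x)"
    by (rule integral_le[OF \<psi>int]) (auto intro!: integrable_diff integrable_add \<phi>int fint fshint pt)
  have I2: "integral {L..B+c} (\<lambda>x. \<phi> x + f (x - c) - f x)
      = integral {L..B+c} \<phi> + integral {L..B+c} (\<lambda>x. f (x - c)) - integral {L..B+c} f"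
    by (simp add: integral_diff integral_add integrable_add \<phi>int fint fshint)
  have I3: "integral {L..B+c} (\<lambda>x. f (x - c)) = integral {L-c..B} f"
    using integral_shift_real_ivl[of "L-c" "-c" B f] by simp
  have I4: "integral {L-c..L} f + integral {L..B} f = integral {L-c..B} f"
    by (rule Henstock_Kurzweil_Integration.integral_combine) (use LB c fint in auto)
  have I5: "integral {L..B} f + integral {B..B+c} f = integral {L..B+c} f"
    by (rule Henstock_Kurzweil_Integration.integral_combine) (use LB c fint in auto)
  have I6: "integral {L-c..L} f = c * v A"
  proof -
    have "integral {L-c..L} f = integral {L-c..L} (\<lambda>x. v A)"
    proof (rule integral_cong)
      fix x assume "x \<in> {L-c..L}"
      then have "geq_set M Z x = space M" using b by (force simp: geq_set_def)
      then show "f x = v A" using Asp by (simp add: f_def Int_absorb2)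
    qed
    then show ?thesis using c by simp
  qed
  have I7: "integral {B..B+c} f = 0"
  proof -
    have "integral {B..B+c} f = integral {B..B+c} (\<lambda>x. 0)"
    proof (rule integral_cong)
      fix x assume "x \<in> {B..B+c}"
      then have "geq_set M Z x = {}" using b by (force simp: geq_set_def)
      then show "f x = 0" using cap by (simp add: f_def capacity_def)
    qed
    then show ?thesis by simp
  qed
  have "choquet M v (\<lambda>\<omega>. Z \<omega> + c * indicator A \<omega>) = L + integral {L..B+c} \<psi>"
    unfolding \<psi>_def by (rule ch_rep[OF cap Z'm b2 LBc])
  moreover have "choquet M v Z = L + integral {L..B+c} \<phi>"
    unfolding \<phi>_def by (rule ch_rep[OF cap Zm b1 LBc])
  ultimately show ?thesis using I1 I2 I3 I4 I5 I6 I7 by linarith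
qed



lemma riemann_lower:
  fixes \<phi> :: "real \<Rightarrow> real"
  assumes anti: "\<And>x y. x \<le> y \<Longrightarrow> \<phi> y \<le> \<phi> x" and n: "0 < n"
  shows "(\<Sum>j\<in>{1..k}. (1 / real n) * \<phi> (real j / real n)) \<le> integral {0..real k / real n} \<phi>"
proof (induction k)
  case 0
  then show ?case by simp
next
  case (Suc k)
  have int: "\<phi> integrable_on {a..b}" for a b by (rule antimono_integrable[OF anti])
  have le: "real k / real n \<le> real (Suc k) / real n" using n by (simp add: divide_right_mono)
  have comb: "integral {0..real k / real n} \<phi> + integral {real k / real n..real (Suc k) / real n} \<phi>
      = integral {0..real (Suc k) / real n} \<phi>"
    by (rule Henstock_Kurzweil_Integration.integral_combine) (use le int in auto)
  have "integral {real k / real n..real (Suc k) / real n} (\<lambda>x. \<phi> (real (Suc k) / real n))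
      \<le> integral {real k / real n..real (Suc k) / real n} \<phi>"
    by (rule integral_le[OF integrable_const_ivl int]) (auto intro: anti)
  moreover have "integral {real k / real n..real (Suc k) / real n} (\<lambda>x. \<phi> (real (Suc k) / real n))
      = (1 / real n) * \<phi> (real (Suc k) / real n)"
    using le n by (simp add: field_simps)
  ultimately show ?case using Suc comb by simp
qed

lemma sum_lower:
  fixes y :: real
  assumes n: "0 < n"
  shows "min (y - 1 / real n) (real k / real n) \<le> (\<Sum>j\<in>{1..k}. (1 / real n) * (if real j / real n \<le> y then 1 else 0))"
proof (induction k)
  case 0
  then show ?case using n by simp
next
  case (Suc k)
  show ?case
  proof (cases "real (Suc k) / real n \<le> y")
    case True
    then show ?thesis using Suc n by (simp add: field_simps min_def split: if_splits)
  next
    case False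
    moreover have "real (Suc k) / real n = real k / real n + 1 / real n" by (simp add: add_divide_distrib)
    ultimately have "y - 1 / real n < real k / real n" by linarith
    then show ?thesis using Suc False n by (simp add: min_def split: if_splits)
  qed
qed

lemma le_eps:
  fixes a b :: real
  assumes "\<And>n::nat. 0 < n \<Longrightarrow> a \<le> b + 1 / real n"
  shows "a \<le> b"
proof (rule ccontr)
  assume "\<not> a \<le> b"
  then obtain n :: nat where "0 < n" "inverse (real n) < a - b"
    using ex_inverse_of_nat_less[of "a - b"] by auto
  with assms[of n] show False by (simp add: field_simps)
qed

lemma ch_subadd_nonneg:
  assumes cap: "capacity M v" and sub: "submodular M v" and X: "X \<in> bdd_meas M" and Y: "Y \<in> bdd_meas M"
    and Y0: "\<And>\<omega>. \<omega> \<in> space M \<Longrightarrow> 0 \<le> Y \<omega>"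
  shows "choquet M v (\<lambda>\<omega>. X \<omega> + Y \<omega>) \<le> choquet M v X + choquet M v Y"
proof (rule le_eps)
  fix n :: nat assume n: "0 < n"
  obtain L B where "L \<le> B" and b: "\<And>\<omega>. \<omega> \<in> space M \<Longrightarrow> L \<le> Y \<omega> \<and> Y \<omega> < B"
    using bdd_bounds[OF Y] by blast
  define B0 where "B0 = max B 0"
  define N where "N = nat \<lceil>real n * B0\<rceil> + 1"
  have B0N: "B0 \<le> real N / real n"
  proof -
    have "real n * B0 \<le> real N" unfolding N_def by linarith
    then show ?thesis using n by (simp add: field_simps)
  qed
  have B00: "0 \<le> B0" by (simp add: B0_def)
  have Ym: "Y \<in> borel_measurable M" using Y by (rule bdd_meas_meas)
  define A where "A j = geq_set M Y (real j / real n)" for j :: nat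
  have Asets: "A j \<in> sets M" for j unfolding A_def by (rule geq_set_sets[OF Ym])
  define S where "S k \<omega> = (\<Sum>j\<in>{1..k}. (1 / real n) * indicator (A j) \<omega>)" for k \<omega>
  have claim: "(\<lambda>\<omega>. X \<omega> + S k \<omega>) \<in> bdd_meas M \<and>
      choquet M v (\<lambda>\<omega>. X \<omega> + S k \<omega>) \<le> choquet M v X + (\<Sum>j\<in>{1..k}. (1 / real n) * v (A j))" for k
  proof (induction k)
    case 0
    have "(\<lambda>\<omega>. X \<omega> + S 0 \<omega>) = X" by (simp add: S_def)
    then show ?case using X by simp
  next
    case (Suc k)
    have eq: "(\<lambda>\<omega>. X \<omega> + S (Suc k) \<omega>) = (\<lambda>\<omega>. (X \<omega> + S k \<omega>) + 1 / real n * indicator (A (Suc k)) \<omega>)"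
      by (simp add: S_def add.assoc)
    have bd: "(\<lambda>\<omega>. X \<omega> + S (Suc k) \<omega>) \<in> bdd_meas M"
      unfolding eq using Suc.IH bdd_add[OF _ bdd_cmult[OF bdd_indicator[OF Asets]]] by blast
    have "choquet M v (\<lambda>\<omega>. X \<omega> + S (Suc k) \<omega>) \<le> choquet M v (\<lambda>\<omega>. X \<omega> + S k \<omega>) + 1 / real n * v (A (Suc k))"
      unfolding eq using Suc.IH n by (intro ch_key[OF cap sub _ Asets]) auto
    then show ?case using Suc.IH bd by simp
  qed
  have SN: "Y \<omega> - 1 / real n \<le> S N \<omega>" if "\<omega> \<in> space M" for \<omega>
  proof -
    have "S N \<omega> = (\<Sum>j\<in>{1..N}. (1 / real n) * (if real j / real n \<le> Y \<omega> then 1 else 0))"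
      unfolding S_def A_def using that by (simp add: indicator_def geq_set_def of_bool_def)
    moreover have "min (Y \<omega> - 1 / real n) (real N / real n) = Y \<omega> - 1 / real n"
    proof -
      have "0 < 1 / real n" using n by simp
      moreover have "B \<le> B0" by (simp add: B0_def)
      ultimately have "Y \<omega> - 1 / real n \<le> real N / real n" using b[OF that] B0N by linarith
      then show ?thesis by (rule min_absorb1)
    qed
    ultimately show ?thesis using sum_lower[OF n, of "Y \<omega>" N] by simp
  qed
  have XS: "(\<lambda>\<omega>. X \<omega> + S N \<omega>) \<in> bdd_meas M" using claim by blast
  have "choquet M v (\<lambda>\<omega>. X \<omega> + Y \<omega>) \<le> choquet M v (\<lambda>\<omega>. (X \<omega> + S N \<omega>) + 1 / real n)"
    by (rule ch_mono[OF cap bdd_add[OF X Y] bdd_plus_const[OF XS]]) (use SN in force)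
  also have "\<dots> = choquet M v (\<lambda>\<omega>. X \<omega> + S N \<omega>) + 1 / real n"
    by (rule ch_trans[OF cap XS])
  also have "\<dots> \<le> choquet M v X + (\<Sum>j\<in>{1..N}. (1 / real n) * v (A j)) + 1 / real n"
    using claim by simp
  also have "(\<Sum>j\<in>{1..N}. (1 / real n) * v (A j)) \<le> choquet M v Y"
  proof -
    have bY: "0 \<le> Y \<omega> \<and> Y \<omega> < real N / real n" if "\<omega> \<in> space M" for \<omega>
      using Y0[OF that] b[OF that] B0N by (simp add: B0_def)
    have "choquet M v Y = 0 + integral {0..real N / real n} (\<lambda>x. v (geq_set M Y x))"
    proof -
      have tst: "0 \<le> real N / real n" using B0N B00 by linarith
      show ?thesis using ch_rep[OF cap Ym bY tst] by simp
    qed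
    moreover have "(\<Sum>j\<in>{1..N}. (1 / real n) * v (A j)) \<le> integral {0..real N / real n} (\<lambda>x. v (geq_set M Y x))"
      unfolding A_def by (rule riemann_lower[OF level_anti[OF cap Ym] n])
    ultimately show ?thesis by simp
  qed
  finally show "choquet M v (\<lambda>\<omega>. X \<omega> + Y \<omega>) \<le> choquet M v X + choquet M v Y + 1 / real n"
    by simp
qed

lemma ch_subadd:
  assumes cap: "capacity M v" and sub: "submodular M v" and X: "X \<in> bdd_meas M" and Y: "Y \<in> bdd_meas M"
  shows "choquet M v (\<lambda>\<omega>. X \<omega> + Y \<omega>) \<le> choquet M v X + choquet M v Y"
proof -
  obtain L B where "L \<le> B" and b: "\<And>\<omega>. \<omega> \<in> space M \<Longrightarrow> L \<le> Y \<omega> \<and> Y \<omega> < B"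
    using bdd_bounds[OF Y] by blast
  define Y0 where "Y0 \<omega> = Y \<omega> + - L" for \<omega>
  have Y0b: "Y0 \<in> bdd_meas M" unfolding Y0_def by (rule bdd_plus_const[OF Y])
  have e1: "(\<lambda>\<omega>. X \<omega> + Y \<omega>) = (\<lambda>\<omega>. (X \<omega> + Y0 \<omega>) + L)" by (simp add: Y0_def)
  have "choquet M v (\<lambda>\<omega>. X \<omega> + Y \<omega>) = choquet M v (\<lambda>\<omega>. X \<omega> + Y0 \<omega>) + L"
    unfolding e1 by (rule ch_trans[OF cap bdd_add[OF X Y0b]])
  also have "\<dots> \<le> choquet M v X + choquet M v Y0 + L"
    using ch_subadd_nonneg[OF cap sub X Y0b] b by (simp add: Y0_def)
  also have "choquet M v Y0 = choquet M v Y + - L"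
    unfolding Y0_def by (rule ch_trans[OF cap Y])
  finally show ?thesis by simp
qed

lemma ch_ind2:
  assumes cap: "capacity M v" and A: "A \<in> sets M" and B: "B \<in> sets M"
  shows "choquet M v (\<lambda>\<omega>. indicator A \<omega> + indicator B \<omega>) = v (A \<union> B) + v (A \<inter> B)"
proof -
  let ?Z = "\<lambda>\<omega>. indicator A \<omega> + indicator B \<omega> :: real"
  have Zm: "?Z \<in> borel_measurable M" using A B by measurable
  have Asp: "A \<subseteq> space M" "B \<subseteq> space M" using A B by (auto dest: sets.sets_into_space)
  have bZ: "0 \<le> ?Z \<omega> \<and> ?Z \<omega> < 3" for \<omega> by (simp add: indicator_def)
  define \<phi> where "\<phi> x = v (geq_set M ?Z x)" for x
  have int: "\<phi> integrable_on {a..b}" for a b unfolding \<phi>_def by (rule level_integrable[OF cap Zm])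
  have "choquet M v ?Z = 0 + integral {0..3} \<phi>"
    unfolding \<phi>_def by (rule ch_rep[OF cap Zm]) (use bZ in auto)
  also have "integral {0..3} \<phi> = integral {0..1} \<phi> + integral {1..3} \<phi>"
    by (rule Henstock_Kurzweil_Integration.integral_combine[symmetric]) (use int in auto)
  also have "integral {1..3} \<phi> = integral {1..2} \<phi> + integral {2..3} \<phi>"
    by (rule Henstock_Kurzweil_Integration.integral_combine[symmetric]) (use int in auto)
  also have "integral {0..1} \<phi> = integral {0..1} (\<lambda>x::real. v (A \<union> B))"
  proof (rule Henstock_Kurzweil_Integration.integral_spike[of "{0::real}"])
    fix x :: real assume "x \<in> {0..1} - {0}"
    then have "geq_set M ?Z x = A \<union> B" using Asp by (auto simp: geq_set_def indicator_def)
    then show "v (A \<union> B) = \<phi> x" by (simp add: \<phi>_def)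
  qed auto
  also have "integral {1..2} \<phi> = integral {1..2} (\<lambda>x::real. v (A \<inter> B))"
  proof (rule Henstock_Kurzweil_Integration.integral_spike[of "{1::real}"])
    fix x :: real assume "x \<in> {1..2} - {1}"
    then have "geq_set M ?Z x = A \<inter> B" using Asp by (auto simp: geq_set_def indicator_def)
    then show "v (A \<inter> B) = \<phi> x" by (simp add: \<phi>_def)
  qed auto
  also have "integral {2..3} \<phi> = integral {2..3} (\<lambda>x::real. 0::real)"
  proof (rule Henstock_Kurzweil_Integration.integral_spike[of "{2::real}"])
    fix x :: real assume "x \<in> {2..3} - {2}"
    then have "geq_set M ?Z x = {}" by (auto simp: geq_set_def indicator_def)
    then show "0 = \<phi> x" using cap by (simp add: \<phi>_def capacity_def)
  qed auto
  finally show ?thesis by simp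
qed

lemma coherent_cong:
  assumes eq: "\<And>X. X \<in> bdd_meas M \<Longrightarrow> R X = R' X"
  shows "coherent M R \<longleftrightarrow> coherent M R'"
proof -
  have c1: "(\<lambda>\<omega>. X \<omega> + c) \<in> bdd_meas M" if "X \<in> bdd_meas M" for X c using bdd_plus_const[OF that] .
  have c2: "(\<lambda>\<omega>. c * X \<omega>) \<in> bdd_meas M" if "X \<in> bdd_meas M" for X c using bdd_cmult[OF that] .
  have c3: "(\<lambda>\<omega>. l * X \<omega> + (1 - l) * Y \<omega>) \<in> bdd_meas M" if "X \<in> bdd_meas M" "Y \<in> bdd_meas M" for X Y l
    using bdd_add[OF bdd_cmult[OF that(1)] bdd_cmult[OF that(2)]] .
  show ?thesis unfolding coherent_def by (simp add: eq c1 c2 c3 cong: ball_cong)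
qed

lemma ch_coherent:
  assumes cap: "capacity M v" and sub: "submodular M v"
  shows "coherent M (choquet M v)"
  unfolding coherent_def
proof (intro conjI ballI allI impI)
  fix X Y assume "X \<in> bdd_meas M" "Y \<in> bdd_meas M" "\<forall>\<omega>\<in>space M. X \<omega> \<le> Y \<omega>"
  then show "choquet M v X \<le> choquet M v Y" using ch_mono[OF cap] by blast
next
  fix X c assume "X \<in> bdd_meas M"
  then show "choquet M v (\<lambda>\<omega>. X \<omega> + c) = choquet M v X + c" by (rule ch_trans[OF cap])
next
  fix X and c :: real assume "X \<in> bdd_meas M" "0 < c"
  then show "choquet M v (\<lambda>\<omega>. c * X \<omega>) = c * choquet M v X" by (rule ch_homog[OF cap])
next
  fix X Y and l :: real assume X: "X \<in> bdd_meas M" and Y: "Y \<in> bdd_meas M" and l: "0 \<le> l \<and> l \<le> 1"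
  show "choquet M v (\<lambda>\<omega>. l * X \<omega> + (1 - l) * Y \<omega>) \<le> l * choquet M v X + (1 - l) * choquet M v Y"
  proof (cases "l = 0 \<or> l = 1")
    case True
    then show ?thesis by auto
  next
    case False
    then have l0: "0 < l" and l1: "0 < 1 - l" using l by auto
    have "choquet M v (\<lambda>\<omega>. l * X \<omega> + (1 - l) * Y \<omega>)
        \<le> choquet M v (\<lambda>\<omega>. l * X \<omega>) + choquet M v (\<lambda>\<omega>. (1 - l) * Y \<omega>)"
      by (rule ch_subadd[OF cap sub bdd_cmult[OF X] bdd_cmult[OF Y]])
    also have "\<dots> = l * choquet M v X + (1 - l) * choquet M v Y"
      using ch_homog[OF cap X l0] ch_homog[OF cap Y l1] by simp
    finally show ?thesis .
  qed
qed

lemma coherent_sub: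
  assumes cap: "capacity M v" and coh: "coherent M (choquet M v)"
  shows "submodular M v"
  unfolding submodular_def
proof (intro ballI)
  fix A B assume A: "A \<in> sets M" and B: "B \<in> sets M"
  let ?ch = "choquet M v"
  have IA: "(indicator A :: 'a \<Rightarrow> real) \<in> bdd_meas M" and IB: "(indicator B :: 'a \<Rightarrow> real) \<in> bdd_meas M"
    using A B by (auto intro: bdd_indicator)
  let ?Z = "\<lambda>\<omega>. (1/2) * indicator A \<omega> + (1 - 1/2) * indicator B \<omega> :: real"
  have Zb: "?Z \<in> bdd_meas M" using bdd_add[OF bdd_cmult[OF IA] bdd_cmult[OF IB]] .
  have conv: "?ch ?Z \<le> (1/2) * ?ch (indicator A) + (1 - 1/2) * ?ch (indicator B)"
  proof -
    have "\<forall>X\<in>bdd_meas M. \<forall>Y\<in>bdd_meas M. \<forall>l::real. 0 \<le> l \<and> l \<le> 1 \<longrightarrow>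
        ?ch (\<lambda>\<omega>. l * X \<omega> + (1 - l) * Y \<omega>) \<le> l * ?ch X + (1 - l) * ?ch Y"
      using coh unfolding coherent_def by blast
    then have "\<forall>l::real. 0 \<le> l \<and> l \<le> 1 \<longrightarrow>
        ?ch (\<lambda>\<omega>. l * indicator A \<omega> + (1 - l) * indicator B \<omega>) \<le> l * ?ch (indicator A) + (1 - l) * ?ch (indicator B)"
      using IA IB by blast
    from spec[OF this, of "1/2"] show ?thesis by simp
  qed
  have hom: "?ch (\<lambda>\<omega>. 2 * ?Z \<omega>) = 2 * ?ch ?Z"
  proof -
    have "\<forall>X\<in>bdd_meas M. \<forall>c::real. c > 0 \<longrightarrow> ?ch (\<lambda>\<omega>. c * X \<omega>) = c * ?ch X"
      using coh unfolding coherent_def by blast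
    then have h: "\<forall>c::real. c > 0 \<longrightarrow> ?ch (\<lambda>\<omega>. c * ?Z \<omega>) = c * ?ch ?Z" using Zb by (rule bspec)
    show ?thesis by (rule h[rule_format]) simp
  qed
  have e: "(\<lambda>\<omega>. 2 * ?Z \<omega>) = (\<lambda>\<omega>. indicator A \<omega> + indicator B \<omega>)"
    by (auto simp: algebra_simps)
  have s: "?ch (\<lambda>\<omega>. indicator A \<omega> + indicator B \<omega>) \<le> ?ch (indicator A) + ?ch (indicator B)"
    using conv hom e by simp
  have single: "?ch (indicator C) = v C" if C: "C \<in> sets M" for C
  proof -
    have IC: "(indicator C :: 'a \<Rightarrow> real) \<in> bdd_meas M" using C by (rule bdd_indicator)
    have "(\<lambda>\<omega>. indicator C \<omega> + indicator C \<omega> :: real) = (\<lambda>\<omega>. 2 * indicator C \<omega>)" by auto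
    then have "v C + v C = 2 * ?ch (indicator C)"
      using ch_ind2[OF cap C C] ch_homog[OF cap IC, of 2] by simp
    then show ?thesis by simp
  qed
  show "v (A \<union> B) + v (A \<inter> B) \<le> v A + v B"
    using s ch_ind2[OF cap A B] single[OF A] single[OF B] by simp
qed

theorem proposition9:
  fixes M :: "'a measure" and w :: "'a set \<Rightarrow> real" and \<alpha> :: real
  assumes "capacity M w" and "0 < \<alpha>" and "\<alpha> \<le> 1"
  shows "(\<forall>X\<in>bdd_meas M. ES M w \<alpha> X = choquet M (w_alpha w \<alpha>) X) \<and>
         (coherent M (ES M w \<alpha>) \<longleftrightarrow> submodular M (w_alpha w \<alpha>))"
proof -
  have eq: "\<And>X. X \<in> bdd_meas M \<Longrightarrow> ES M w \<alpha> X = choquet M (w_alpha w \<alpha>) X"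
    using ES_eq[OF assms] by blast
  have cap: "capacity M (w_alpha w \<alpha>)" by (rule capacity_w_alpha[OF assms])
  have "coherent M (ES M w \<alpha>) \<longleftrightarrow> coherent M (choquet M (w_alpha w \<alpha>))"
    by (rule coherent_cong[OF eq])
  also have "\<dots> \<longleftrightarrow> submodular M (w_alpha w \<alpha>)"
    using ch_coherent[OF cap] coherent_sub[OF cap] by blast
  finally show ?thesis using eq by blast
qed


end
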